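(* Let ${\mathbf a}_1,\dots,{\mathbf a}_m\in\mathbb{C}^n$ and let $\mathcal{A}:\mathbb{H}^{n\times n}\to\mathbb{R}^m$, $\mathcal{A}(X)=({\mathbf a}_1^*X{\mathbf a}_1,\dots,{\mathbf a}_m^*X{\mathbf a}_m)$. Let $k\ge1$ and $a>0$ be such that $ak$ is a positive integer, and suppose $\mathcal{A}$ satisfies the restricted isometry property of order $(2,2ak)$ with constants $c,C>0$ satisfying \[ c-\frac{4C}{\sqrt a}-\frac{C}{a}>0 . \] Let ${\mathbf x}_0\in\mathbb{C}^n$ be nonzero with $\|{\mathbf x}_0\|_0\le k$, let $\epsilon\ge 0$, and let ${\mathbf y}=\mathcal{A}({\mathbf x}_0{\mathbf x}_0^* )+{\mathbf w}$ with ${\mathbf w}\in\mathbb{R}^m$, $\|{\mathbf w}\|_2\le\epsilon$. Let ${\mathbf x}^\#$ be any solution of \[ \min_{{\mathbf x}\in\mathbb{C}^n}\|{\mathbf x}\|_1\quad\text{s.t.}\quad \|\mathcal{A}({\mathbf x}{\mathbf x}^* )-{\mathbf y}\|_2\le\epsilon . \] Then, with \[ C_1=\frac{\frac1a+\frac{4}{\sqrt a}+1}{c-\frac{4C}{\sqrt a}-\frac{C}{a}}, \] we have \[ \|{\mathbf x}^\#({\mathbf x}^\#)^*-{\mathbf x}_0{\mathbf x}_0^*\|_F\le C_1\frac{2\epsilon}{\sqrt m}, \] and \[ \min_{\gamma\in\mathbb{C},|\gamma|=1}\|\gamma{\mathbf x}^\#-{\mathbf x}_0\|_2\le\min\Big\{\frac{2\sqrt2\,C_1\,\epsilon}{\sqrt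 m\,\|{\mathbf x}_0\|_2},\; 2\sqrt{2\sqrt2\,C_1}\,\sqrt{\epsilon}\,(n/m)^{1/4}\Big\}. \]
   Context: $\mathbb{H}^{n\times n}$ denotes the set of $n\times n$ complex Hermitian matrices. $\|{\mathbf x}\|_0$ is the number of nonzero entries of ${\mathbf x}$. $\|X\|_{0,2}$ denotes the number of nonzero rows of $X$. $\|X\|_F$ is the Frobenius norm. A linear map $\mathcal{A}:\mathbb{H}^{n\times n}\to\mathbb{R}^m$ satisfies the restricted isometry property of order $(r,k)$ with constants $0<c\le C$ if $c\|X\|_F\le \frac1m\|\mathcal{A}(X)\|_1\le C\|X\|_F$ for all $X\in\mathbb{H}^{n\times n}$ with $\operatorname{rank}(X)\le r$ and $\|X\|_{0,2}\le k$. *)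

theory Defs
  imports "HOL-Analysis.Analysis"
begin

definition hermitian :: "complex^'n^'n \<Rightarrow> bool" where
  "hermitian X \<longleftrightarrow> (\<forall>i j. X $ i $ j = cnj (X $ j $ i))"

(* the measurement map A(X) = (a_i^* X a_i)_i ; real-valued on Hermitian X *)
definition meas :: "('m \<Rightarrow> complex^'n) \<Rightarrow> complex^'n^'n \<Rightarrow> real^'m" where
  "meas a X = (\<chi> i. Re (\<Sum>j\<in>UNIV. cnj (a i $ j) * (X *v a i) $ j))"

definition outer :: "complex^'n \<Rightarrow> complex^'n^'n" where
  "outer x = (\<chi> i j. x $ i * cnj (x $ j))"

definition frob :: "complex^'n^'n \<Rightarrow> real" where
  "frob X = sqrt (\<Sum>i\<in>UNIV. \<Sum>j\<in>UNIV. (cmod (X $ i $ j))\<^sup>2)"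

definition nzrows :: "complex^'n^'n \<Rightarrow> nat" where
  "nzrows X = card {i. \<exists>j. X $ i $ j \<noteq> 0}"

definition l0 :: "complex^'n \<Rightarrow> nat" where
  "l0 x = card {i. x $ i \<noteq> 0}"

definition l1 :: "complex^'n \<Rightarrow> real" where
  "l1 x = (\<Sum>i\<in>UNIV. cmod (x $ i))"

definition l1m :: "real^'m \<Rightarrow> real" where
  "l1m v = (\<Sum>i\<in>UNIV. \<bar>v $ i\<bar>)"

definition RIP :: "('m::finite \<Rightarrow> complex^'n::finite) \<Rightarrow> nat \<Rightarrow> real \<Rightarrow> real \<Rightarrow> real \<Rightarrow> bool" where
  "RIP a r k c C \<longleftrightarrow> 0 < c \<and> c \<le> C \<and>
     (\<forall>X. hermitian X \<and> rank X \<le> r \<and> real (nzrows X) \<le> k \<longrightarrow>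
        c * frob X \<le> l1m (meas a X) / real CARD('m) \<and>
        l1m (meas a X) / real CARD('m) \<le> C * frob X)"

end

theory Submission
  imports Defs
begin


definition outer2 :: "complex^'n \<Rightarrow> complex^'n \<Rightarrow> complex^'n^'n" where
  "outer2 v w = (\<chi> i j. v$i * cnj (w$j))"

definition vmask :: "'n set \<Rightarrow> complex^'n \<Rightarrow> complex^'n" where
  "vmask S v = (\<chi> i. if i \<in> S then v$i else 0)"

lemma outer_eq: "outer x = outer2 x x"
  by (simp add: outer_def outer2_def)

lemma outer2_add_left: "outer2 (v + v') w = outer2 v w + outer2 v' w"
  by (simp add: outer2_def vec_eq_iff algebra_simps)
lemma outer2_add_right: "outer2 v (w + w') = outer2 v w + outer2 v w'"
  by (simp add: outer2_def vec_eq_iff algebra_simps)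
lemma outer2_minus_left: "outer2 (-v) w = - outer2 v w"
  by (simp add: outer2_def vec_eq_iff)
lemma outer2_sum_left: "outer2 (sum f S) w = (\<Sum>s\<in>S. outer2 (f s) w)"
  by (induction S rule: infinite_finite_induct) (auto simp: outer2_add_left, simp_all add: outer2_def vec_eq_iff)
lemma outer2_sum_right: "outer2 w (sum f S) = (\<Sum>s\<in>S. outer2 w (f s))"
  by (induction S rule: infinite_finite_induct) (auto simp: outer2_add_right, simp_all add: outer2_def vec_eq_iff)

lemma norm_sq_vec: "(norm (x::'a::real_normed_vector^'n))^2 = (\<Sum>i\<in>UNIV. (norm (x$i))^2)"
  unfolding norm_vec_def L2_set_def by (simp add: sum_nonneg)

lemma frob_eq_norm: "frob X = norm X"
proof -
  have "(norm X)^2 = (\<Sum>i\<in>UNIV. \<Sum>j\<in>UNIV. (cmod (X $ i $ j))\<^sup>2)"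
    by (simp add: norm_sq_vec)
  then show ?thesis unfolding frob_def by (metis norm_ge_zero real_sqrt_unique)
qed

lemma norm_outer2: "norm (outer2 v w) = norm v * norm w"
proof -
  have "(norm (outer2 v w))^2 = (\<Sum>i\<in>UNIV. \<Sum>j\<in>UNIV. (cmod (v$i))^2 * (cmod (w$j))^2)"
    by (simp add: norm_sq_vec outer2_def norm_mult power_mult_distrib)
  also have "\<dots> = (norm v)^2 * (norm w)^2"
    by (simp add: norm_sq_vec sum_product)
  finally show ?thesis
    by (metis norm_ge_zero power_mult_distrib power2_eq_iff_nonneg zero_le_mult_iff)
qed

lemma meas_add: "meas a (X + Y) = meas a X + meas a Y"
  by (simp add: meas_def vec_eq_iff matrix_vector_mult_def sum.distrib algebra_simps sum_distrib_left)
lemma meas_minus: "meas a (- X) = - meas a X"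
  by (simp add: meas_def vec_eq_iff matrix_vector_mult_def algebra_simps sum_negf)
lemma meas_diff: "meas a (X - Y) = meas a X - meas a Y"
  by (metis diff_conv_add_uminus meas_add meas_minus)
lemma meas_zero: "meas a 0 = 0"
  by (metis add.right_neutral add_left_cancel meas_add)
lemma meas_sum: "meas a (sum f S) = (\<Sum>s\<in>S. meas a (f s))"
  by (induction S rule: infinite_finite_induct) (auto simp: meas_add meas_zero)

lemma l1m_nonneg: "0 \<le> l1m v" by (simp add: l1m_def sum_nonneg)
lemma l1m_add: "l1m (u + v) \<le> l1m u + l1m v"
  unfolding l1m_def by (simp add: sum.distrib[symmetric] sum_mono abs_triangle_ineq)
lemma l1m_minus: "l1m (- v) = l1m v" by (simp add: l1m_def)
lemma l1m_zero: "l1m 0 = 0" by (simp add: l1m_def)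
lemma l1m_sum: "l1m (sum f S) \<le> (\<Sum>s\<in>S. l1m (f s))"
  by (induction S rule: infinite_finite_induct) (auto simp: l1m_zero intro: order_trans[OF l1m_add])

lemma cs_sum: "finite A \<Longrightarrow> (\<Sum>i\<in>A. \<bar>f i\<bar>) \<le> sqrt (real (card A)) * sqrt (\<Sum>i\<in>A. (f i)^2)"
proof -
  assume "finite A"
  have "(\<Sum>i\<in>A. \<bar>f i\<bar> * \<bar>1\<bar>) \<le> L2_set f A * L2_set (\<lambda>_. 1::real) A"
    by (rule L2_set_mult_ineq)
  then show ?thesis by (simp add: L2_set_def mult.commute)
qed

lemma l1m_le: "l1m (v::real^'m) \<le> sqrt (real CARD('m)) * norm v"
  using cs_sum[of UNIV "\<lambda>i. v$i"] by (simp add: l1m_def norm_vec_def L2_set_def)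



lemma herm_sym: "hermitian (outer2 v w + outer2 w v)"
  by (simp add: hermitian_def outer2_def)
lemma herm_diff: "hermitian (outer2 v v - outer2 x x)"
  by (simp add: hermitian_def outer2_def)

lemma rank_outer2:
  fixes a b c d :: "complex^'n::finite"
  shows "rank (outer2 a b + outer2 c d) \<le> 2"
proof -
  let ?bc = "(\<chi> j. cnj (b$j)) :: complex^'n" and ?dc = "(\<chi> j. cnj (d$j)) :: complex^'n"
  have "rows (outer2 a b + outer2 c d) \<subseteq> vec.span {?bc, ?dc}"
  proof
    fix r assume "r \<in> rows (outer2 a b + outer2 c d)"
    then obtain i where r: "r = row i (outer2 a b + outer2 c d)" by (auto simp: rows_def)
    have "r = a$i *s ?bc + c$i *s ?dc" by (simp add: r row_def outer2_def vec_eq_iff)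
    then show "r \<in> vec.span {?bc, ?dc}"
      by (simp add: vec.span_add vec.span_base vec.span_scale)
  qed
  then have "vec.dim (rows (outer2 a b + outer2 c d)) \<le> card {?bc, ?dc}"
    by (intro vec.dim_le_card) auto
  also have "\<dots> \<le> 2" by (simp add: card_insert_le_m1)
  finally show ?thesis by (simp add: row_rank_def_gen)
qed

lemma nzrows_outer2: "nzrows (outer2 a b + outer2 c d) \<le> card ({i. a$i \<noteq> 0} \<union> {i. c$i \<noteq> 0})"
  unfolding nzrows_def by (rule card_mono) (auto simp: outer2_def)

lemma norm_restrict_le: "norm ((\<chi> i j. if P i j then X$i$j else 0) :: complex^'n^'n) \<le> norm X"
proof -
  have "(norm ((\<chi> i j. if P i j then X$i$j else 0) :: complex^'n^'n))^2 \<le> (norm X)^2"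
    unfolding norm_sq_vec by (intro sum_mono) (auto simp: norm_sq_vec intro!: sum_mono)
  then show ?thesis by (simp add: power2_le_iff_abs_le)
qed

lemma norm_sym_disj:
  assumes "\<And>i. v$i = 0 \<or> w$i = 0"
  shows "norm (outer2 v w + outer2 w v) = sqrt 2 * (norm v * norm w)"
proof -
  have e: "(cmod (v$i * cnj (w$j) + w$i * cnj (v$j)))^2 = (cmod (v$i))^2 * (cmod (w$j))^2 + (cmod (w$i))^2 * (cmod (v$j))^2" for i j
    using assms[of i] by (auto simp: norm_mult power_mult_distrib)
  have "(norm (outer2 v w + outer2 w v))^2 = (\<Sum>i\<in>UNIV. \<Sum>j\<in>UNIV. (cmod (v$i))^2 * (cmod (w$j))^2 + (cmod (w$i))^2 * (cmod (v$j))^2)"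
    by (simp add: norm_sq_vec outer2_def e)
  also have "\<dots> = 2 * ((norm v)^2 * (norm w)^2)"
    by (simp add: norm_sq_vec sum.distrib flip: sum_product)
  also have "\<dots> = (sqrt 2 * (norm v * norm w))^2" by (simp add: power_mult_distrib)
  finally show ?thesis
    by (metis norm_ge_zero power2_eq_iff_nonneg real_sqrt_ge_zero zero_le_mult_iff zero_le_numeral)
qed



lemma phase:
  fixes p q :: "complex^'n::finite"
  obtains \<gamma> t where "cmod \<gamma> = 1" "0 \<le> t" "t \<le> norm p * norm q"
    "(norm (q - \<gamma> *s p))^2 = (norm p)^2 + (norm q)^2 - 2*t"
    "(norm (outer p - outer q))^2 = (norm p)^4 + (norm q)^4 - 2*t^2"
proof -
  define s where "s = (\<Sum>i\<in>UNIV. cnj (p$i) * q$i)"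
  define t where "t = cmod s"
  define \<gamma> where "\<gamma> = (if s = 0 then 1 else s / of_real t)"
  have g1: "cmod \<gamma> = 1" by (simp add: \<gamma>_def t_def norm_divide)
  have gg: "\<gamma> * cnj \<gamma> = 1" using g1 by (metis complex_norm_square of_real_1 power_one)
  have gs: "cnj \<gamma> * s = of_real t"
  proof (cases "s = 0")
    case True then show ?thesis by (simp add: \<gamma>_def t_def)
  next
    case False
    then have "t \<noteq> 0" by (simp add: t_def)
    moreover have "cnj s * s = of_real (t^2)" by (metis complex_norm_square mult.commute t_def)
    ultimately show ?thesis using False by (simp add: \<gamma>_def field_simps power2_eq_square)
  qed
  have gs': "\<gamma> * cnj s = of_real t" using gs by (metis complex_cnj_cnj complex_cnj_mult complex_cnj_complex_of_real)
  have P: "complex_of_real ((norm p)^2) = (\<Sum>i\<in>UNIV. p$i * cnj (p$i))"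
    by (simp only: norm_sq_vec of_real_sum complex_norm_square)
  have Q: "complex_of_real ((norm q)^2) = (\<Sum>i\<in>UNIV. q$i * cnj (q$i))"
    by (simp only: norm_sq_vec of_real_sum complex_norm_square)
  have sc: "cnj s = (\<Sum>i\<in>UNIV. p$i * cnj (q$i))" by (simp add: s_def mult.commute)
  have "complex_of_real ((norm (q - \<gamma> *s p))^2) = (\<Sum>i\<in>UNIV. (q$i - \<gamma> * p$i) * cnj (q$i - \<gamma> * p$i))"
    by (simp only: norm_sq_vec of_real_sum complex_norm_square) simp
  also have "\<dots> = (\<Sum>i\<in>UNIV. q$i * cnj (q$i)) + (\<gamma> * cnj \<gamma>) * (\<Sum>i\<in>UNIV. p$i * cnj (p$i))
      - cnj \<gamma> * (\<Sum>i\<in>UNIV. cnj (p$i) * q$i) - \<gamma> * (\<Sum>i\<in>UNIV. p$i * cnj (q$i))"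
    by (simp add: algebra_simps sum.distrib sum_distrib_left sum_subtractf)
  also have "\<dots> = complex_of_real ((norm p)^2 + (norm q)^2 - 2*t)"
    using gg gs gs' P Q sc by (simp add: s_def[symmetric])
  finally have e1: "(norm (q - \<gamma> *s p))^2 = (norm p)^2 + (norm q)^2 - 2*t" using of_real_eq_iff by blast
  have "complex_of_real ((norm (outer p - outer q))^2) =
     (\<Sum>i\<in>UNIV. \<Sum>j\<in>UNIV. (p$i * cnj (p$j) - q$i * cnj (q$j)) * cnj (p$i * cnj (p$j) - q$i * cnj (q$j)))"
    by (simp only: norm_sq_vec of_real_sum complex_norm_square) (simp add: outer_def)
  also have "\<dots> = (\<Sum>i\<in>UNIV. \<Sum>j\<in>UNIV. (p$i * cnj (p$i)) * (p$j * cnj (p$j)) + (q$i * cnj (q$i)) * (q$j * cnj (q$j))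
      - (p$i * cnj (q$i)) * (cnj (p$j) * q$j) - (cnj (p$i) * q$i) * (p$j * cnj (q$j)))"
    by (intro sum.cong refl) (simp add: algebra_simps)
  also have "\<dots> = (\<Sum>i\<in>UNIV. p$i * cnj (p$i)) * (\<Sum>j\<in>UNIV. p$j * cnj (p$j)) + (\<Sum>i\<in>UNIV. q$i * cnj (q$i)) * (\<Sum>j\<in>UNIV. q$j * cnj (q$j))
      - (\<Sum>i\<in>UNIV. p$i * cnj (q$i)) * (\<Sum>j\<in>UNIV. cnj (p$j) * q$j) - (\<Sum>i\<in>UNIV. cnj (p$i) * q$i) * (\<Sum>j\<in>UNIV. p$j * cnj (q$j))"
    by (simp add: sum_product sum.distrib sum_subtractf)
  also have "\<dots> = complex_of_real ((norm p)^2) * complex_of_real ((norm p)^2) + complex_of_real ((norm q)^2) * complex_of_real ((norm q)^2)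
      - cnj s * s - s * cnj s"
    by (simp only: P[symmetric] Q[symmetric] sc[symmetric] s_def[symmetric])
  also have "\<dots> = complex_of_real ((norm p)^4 + (norm q)^4 - 2*t^2)"
  proof -
    have cs: "cnj s * s = of_real (t^2)" by (metis complex_norm_square mult.commute t_def)
    have "complex_of_real ((norm p)^2) * complex_of_real ((norm p)^2) + complex_of_real ((norm q)^2) * complex_of_real ((norm q)^2)
      - cnj s * s - s * cnj s = complex_of_real ((norm p)^2 * (norm p)^2 + (norm q)^2 * (norm q)^2 - 2 * t^2)"
      using cs by (simp add: mult.commute[of s])
    moreover have "(norm p)^2 * (norm p)^2 + (norm q)^2 * (norm q)^2 - 2 * t^2 = (norm p)^4 + (norm q)^4 - 2*t^2"
      by (simp add: power4_eq_xxxx power2_eq_square)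
    ultimately show ?thesis by metis
  qed
  finally have e2: "(norm (outer p - outer q))^2 = (norm p)^4 + (norm q)^4 - 2*t^2" using of_real_eq_iff by blast
  have "t \<le> (\<Sum>i\<in>UNIV. cmod (cnj (p$i) * q$i))" unfolding t_def s_def by (rule norm_sum)
  also have "\<dots> = (\<Sum>i\<in>UNIV. \<bar>cmod (p$i)\<bar> * \<bar>cmod (q$i)\<bar>)" by (simp add: norm_mult)
  also have "\<dots> \<le> norm p * norm q" unfolding norm_vec_def by (rule L2_set_mult_ineq)
  finally have "t \<le> norm p * norm q" .
  then show ?thesis using that[OF g1 _ _ e1 e2] by (simp add: t_def)
qed



lemma ineq1:
  fixes x y t :: real
  assumes "0 \<le> x" "0 \<le> y" "0 \<le> t" "t \<le> x*y"
  shows "x^2 * (x^2 + y^2 - 2*t) \<le> 2 * (x^4 + y^4 - 2*t^2)"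
proof -
  define g where "g = (\<lambda>z. x^4 + 2*y^4 - x^2*y^2 + 2*x^2*z - 4*z^2)"
  have g0: "g 0 \<ge> 0"
  proof -
    have "g 0 = (x^2 - y^2)^2 + y^4 + x^2*y^2" by (simp add: g_def power2_eq_square power4_eq_xxxx algebra_simps)
    then show ?thesis by (simp add: add_nonneg_nonneg)
  qed
  have gT: "g (x*y) \<ge> 0"
  proof -
    have "g (x*y) = (x-y)^2 * (x^2 + 4*x*y + 2*y^2)" by (simp add: g_def power2_eq_square power4_eq_xxxx algebra_simps)
    then show ?thesis using assms by simp
  qed
  have key: "(x*y) * g t = (x*y - t) * g 0 + t * g (x*y) + 4*t*(x*y)*(x*y - t)"
    by (simp add: g_def power2_eq_square power4_eq_xxxx algebra_simps)
  have "g t \<ge> 0"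
  proof (cases "x*y = 0")
    case True then have "t = 0" using assms by (metis antisym mult_eq_0_iff)
    then show ?thesis using g0 by simp
  next
    case False
    then have xy: "x*y > 0" using assms by (simp add: less_le)
    have "(x*y) * g t \<ge> 0" unfolding key using assms g0 gT by (intro add_nonneg_nonneg mult_nonneg_nonneg) auto
    then show ?thesis using xy by (simp add: zero_le_mult_iff)
  qed
  then show ?thesis by (simp add: g_def power2_eq_square power4_eq_xxxx algebra_simps)
qed

lemma ineq2:
  fixes x y t :: real
  assumes "0 \<le> x" "0 \<le> y" "0 \<le> t" "t \<le> x*y"
  shows "(x^2 + y^2 - 2*t)^2 \<le> 4 * (x^4 + y^4 - 2*t^2)"
proof -
  have a: "x^2 * (x^2 + y^2 - 2*t) \<le> 2 * (x^4 + y^4 - 2*t^2)" by (rule ineq1[OF assms])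
  have b: "y^2 * (x^2 + y^2 - 2*t) \<le> 2 * (x^4 + y^4 - 2*t^2)"
    using ineq1[of y x t] assms by (simp add: mult.commute add.commute)
  have d: "0 \<le> x^2 + y^2 - 2*t"
  proof -
    have "2*t \<le> 2*x*y" using assms by simp
    also have "\<dots> \<le> x^2 + y^2" using sum_squares_bound[of x y] by simp
    finally show ?thesis by simp
  qed
  have "(x^2 + y^2 - 2*t)^2 \<le> (x^2 + y^2) * (x^2 + y^2 - 2*t)"
  proof -
    have "(x^2 + y^2 - 2*t) \<le> x^2 + y^2" using assms by simp
    from mult_right_mono[OF this d] show ?thesis by (simp add: power2_eq_square)
  qed
  also have "\<dots> = x^2 * (x^2 + y^2 - 2*t) + y^2 * (x^2 + y^2 - 2*t)" by (simp add: algebra_simps)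
  also have "\<dots> \<le> 4 * (x^4 + y^4 - 2*t^2)" using a b by simp
  finally show ?thesis .
qed

lemma phase_cor:
  fixes p q :: "complex^'n::finite"
  obtains \<gamma> where "cmod \<gamma> = 1"
    "norm p * norm (q - \<gamma> *s p) \<le> sqrt 2 * norm (outer p - outer q)"
    "norm q * norm (q - \<gamma> *s p) \<le> sqrt 2 * norm (outer p - outer q)"
    "(norm (q - \<gamma> *s p))^2 \<le> 2 * norm (outer p - outer q)"
proof -
  obtain \<gamma> t where g: "cmod \<gamma> = 1" "0 \<le> t" "t \<le> norm p * norm q"
    and e1: "(norm (q - \<gamma> *s p))^2 = (norm p)^2 + (norm q)^2 - 2*t"
    and e2: "(norm (outer p - outer q))^2 = (norm p)^4 + (norm q)^4 - 2*t^2"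
    by (rule phase)
  let ?d = "norm (q - \<gamma> *s p)" and ?h = "norm (outer p - outer q)"
  have a: "(norm p)^2 * ?d^2 \<le> 2 * ?h^2" using ineq1[of "norm p" "norm q" t] g unfolding e1 e2 by simp
  have b: "(norm q)^2 * ?d^2 \<le> 2 * ?h^2" using ineq1[of "norm q" "norm p" t] g unfolding e1 e2
    by (simp add: mult.commute add.commute)
  have c0: "(?d^2)^2 \<le> 4 * ?h^2" using ineq2[of "norm p" "norm q" t] g unfolding e1 e2
    by simp
  have c: "(?d^2)^2 \<le> (2 * ?h)^2" using c0 by (simp add: power_mult_distrib)
  have s2: "2 * ?h^2 = (sqrt 2 * ?h)^2" by (simp add: power_mult_distrib)
  show ?thesis
  proof (rule that[OF g(1)])
    show "norm p * ?d \<le> sqrt 2 * ?h" using a unfolding s2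
      by (metis norm_ge_zero power_mult_distrib power2_le_imp_le real_sqrt_ge_zero zero_le_mult_iff zero_le_numeral)
    show "norm q * ?d \<le> sqrt 2 * ?h" using b unfolding s2
      by (metis norm_ge_zero power_mult_distrib power2_le_imp_le real_sqrt_ge_zero zero_le_mult_iff zero_le_numeral)
    show "?d^2 \<le> 2 * ?h" using c by (rule power2_le_imp_le) simp
  qed
qed



lemma l1_mask: "l1 (vmask S u) = (\<Sum>i\<in>S. cmod (u$i))"
  unfolding l1_def vmask_def by (simp add: if_distrib sum.If_cases)

lemma normsq_mask: "(norm (vmask S u))^2 = (\<Sum>i\<in>S. (cmod (u$i))^2)"
proof -
  have e: "(\<lambda>i. (norm ((vmask S u)$i))^2) = (\<lambda>i. if i\<in>S then (cmod (u$i))^2 else 0)"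
    by (auto simp: vmask_def)
  show ?thesis unfolding norm_sq_vec e by (simp add: sum.If_cases)
qed

lemma blocks:
  fixes u :: "complex^'n::finite" and Z :: "'n set" and K :: nat
  assumes K: "K \<ge> 1"
  obtains bl :: "'n \<Rightarrow> nat" where
    "\<And>i. bl i = 0 \<longleftrightarrow> i \<in> Z"
    "\<And>i. bl i \<le> CARD('n)"
    "\<And>j. j \<ge> 1 \<Longrightarrow> card {i. bl i = j} \<le> K"
    "\<And>j i i'. j \<ge> 2 \<Longrightarrow> bl i = j \<Longrightarrow> bl i' = j - 1 \<Longrightarrow> cmod (u$i) \<le> cmod (u$i')"
    "\<And>j i. j \<ge> 2 \<Longrightarrow> bl i = j \<Longrightarrow> card {i'. bl i' = j - 1} \<ge> K"
proof -
  obtain l0 where l0: "set l0 = UNIV - Z" "distinct l0" using finite_distinct_list[of "UNIV - Z"] by auto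
  define key where "key = (\<lambda>i. - cmod (u$i))"
  define l where "l = sort_key key l0"
  have sl: "set l = UNIV - Z" "distinct l" "sorted (map key l)" using l0 by (auto simp: l_def)
  define pos where "pos i = (THE p. p < length l \<and> l!p = i)" for i
  have pos1: "pos i < length l \<and> l ! pos i = i" if "i \<notin> Z" for i
  proof -
    have "\<exists>!p. p < length l \<and> l!p = i" using distinct_Ex1[OF sl(2)] that sl(1) by auto
    then show ?thesis unfolding pos_def by (rule theI')
  qed
  have pos2: "pos (l!p) = p" if "p < length l" for p
  proof -
    have "\<exists>!q. q < length l \<and> l!q = l!p" using distinct_Ex1[OF sl(2)] that by auto
    then show ?thesis unfolding pos_def using that by (intro the1_equality) auto
  qed
  have nth_in: "l!p \<notin> Z" if "p < length l" for p using sl(1) that nth_mem by fastforce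
  have len: "length l \<le> CARD('n)" using distinct_card[OF sl(2)] card_mono[of UNIV "set l"] by simp
  define bl where "bl i = (if i \<in> Z then 0 else pos i div K + 1)" for i
  show ?thesis
  proof (rule that)
    show "bl i = 0 \<longleftrightarrow> i \<in> Z" for i by (simp add: bl_def)
    show "bl i \<le> CARD('n)" for i
    proof (cases "i \<in> Z")
      case False
      have "pos i div K \<le> pos i" by simp
      then have "Suc (pos i div K) \<le> CARD('n)" using pos1[OF False] len by linarith
      then show ?thesis using False by (simp add: bl_def)
    qed (simp add: bl_def)
    show "card {i. bl i = j} \<le> K" if "j \<ge> 1" for j
    proof -
      have "{i. bl i = j} \<subseteq> (\<lambda>p. l!p) ` {(j-1)*K..<(j-1)*K+K}"
      proof
        fix i assume "i \<in> {i. bl i = j}"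
        then have i: "i \<notin> Z" "pos i div K = j - 1" using that by (auto simp: bl_def split: if_splits)
        have dm: "pos i div K * K + pos i mod K = pos i" by simp
        have mk: "pos i mod K < K" using K by simp
        have "(j-1)*K \<le> pos i" "pos i < (j-1)*K+K" using dm mk unfolding i(2) by linarith+
        then show "i \<in> (\<lambda>p. l!p) ` {(j-1)*K..<(j-1)*K+K}" using pos1[OF i(1)] by (metis atLeastLessThan_iff image_eqI)
      qed
      then have "card {i. bl i = j} \<le> card ((\<lambda>p. l!p) ` {(j-1)*K..<(j-1)*K+K})" by (intro card_mono) auto
      also have "\<dots> \<le> K" using card_image_le[of "{(j-1)*K..<(j-1)*K+K}" "\<lambda>p. l!p"] by simp
      finally show ?thesis .
    qed
    show "cmod (u$i) \<le> cmod (u$i')" if "j \<ge> 2" "bl i = j" "bl i' = j - 1" for j i i'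
    proof -
      have ii: "i \<notin> Z" "i' \<notin> Z" "pos i div K = j - 1" "pos i' div K = j - 2"
        using that by (auto simp: bl_def split: if_splits)
      have "pos i' < pos i"
      proof (rule ccontr)
        assume "\<not> pos i' < pos i"
        then have "pos i div K \<le> pos i' div K" by (simp add: div_le_mono)
        then show False using ii that by simp
      qed
      then have "key (l ! pos i') \<le> key (l ! pos i)"
        using sorted_nth_mono[OF sl(3), of "pos i'" "pos i"] pos1[OF ii(1)] by simp
      then show ?thesis using pos1[OF ii(1)] pos1[OF ii(2)] by (simp add: key_def)
    qed
    show "card {i'. bl i' = j - 1} \<ge> K" if "j \<ge> 2" "bl i = j" for j i
    proof -
      have ii: "i \<notin> Z" "pos i div K = j - 1" using that by (auto simp: bl_def split: if_splits)
      have pl: "(j-1)*K \<le> pos i"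
      proof -
        have dm: "pos i div K * K + pos i mod K = pos i" by simp
        then show ?thesis unfolding ii(2) by linarith
      qed
      have jj: "(j-2)*K + K = (j-1)*K" using that(1)
        by (metis Suc_diff_le Suc_1 diff_Suc_Suc mult_Suc add.commute)
      have sub: "(\<lambda>p. l!p) ` {(j-2)*K..<(j-2)*K+K} \<subseteq> {i'. bl i' = j - 1}"
      proof
        fix x assume "x \<in> (\<lambda>p. l!p) ` {(j-2)*K..<(j-2)*K+K}"
        then obtain p where p: "(j-2)*K \<le> p" "p < (j-2)*K+K" "x = l!p" by auto
        have "p < length l" using jj p pl pos1[OF ii(1)] by linarith
        moreover have "p div K = j - 2"
          using p by (intro div_nat_eqI) (auto simp: mult.commute)
        ultimately show "x \<in> {i'. bl i' = j - 1}"
          using p(3) nth_in pos2 that(1) by (auto simp: bl_def)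
      qed
      have "inj_on (\<lambda>p. l!p) {(j-2)*K..<(j-2)*K+K}"
      proof (rule inj_on_nth[OF sl(2)])
        show "\<forall>p\<in>{(j-2)*K..<(j-2)*K+K}. p < length l" using jj pl pos1[OF ii(1)] by auto
      qed
      then have "card ((\<lambda>p. l!p) ` {(j-2)*K..<(j-2)*K+K}) = K" by (simp add: card_image)
      then show ?thesis using card_mono[OF _ sub] by (metis finite)
    qed
  qed
qed



lemma tail_one:
  fixes u :: "complex^'n::finite" and bl :: "'n \<Rightarrow> nat"
  assumes K: "K \<ge> 1"
    and c1: "\<And>j. j \<ge> 1 \<Longrightarrow> card {i. bl i = j} \<le> K"
    and c2: "\<And>j i i'. j \<ge> 2 \<Longrightarrow> bl i = j \<Longrightarrow> bl i' = j - 1 \<Longrightarrow> cmod (u$i) \<le> cmod (u$i')"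
    and c3: "\<And>j i. j \<ge> 2 \<Longrightarrow> bl i = j \<Longrightarrow> card {i'. bl i' = j - 1} \<ge> K"
    and j: "j \<ge> 2"
  shows "norm (vmask {i. bl i = j} u) * sqrt K \<le> l1 (vmask {i. bl i = j - 1} u)"
proof (cases "{i. bl i = j} = {}")
  case True
  then have "vmask {i. bl i = j} u = 0" by (simp add: vmask_def vec_eq_iff)
  then show ?thesis by (simp add: l1_def sum_nonneg)
next
  case False
  then obtain i0 where i0: "bl i0 = j" by auto
  define M where "M = l1 (vmask {i. bl i = j - 1} u)"
  have M: "M = (\<Sum>i'\<in>{i. bl i = j - 1}. cmod (u$i'))" by (simp add: M_def l1_mask)
  have Mnn: "M \<ge> 0" unfolding M by (simp add: sum_nonneg)
  have each: "cmod (u$i) * K \<le> M" if "bl i = j" for i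
  proof -
    have "cmod (u$i) * K \<le> cmod (u$i) * card {i'. bl i' = j - 1}"
      using c3[OF j i0] by (intro mult_left_mono) simp_all
    also have "\<dots> = (\<Sum>i'\<in>{i. bl i = j - 1}. cmod (u$i))" by simp
    also have "\<dots> \<le> M" unfolding M using c2[OF j that] by (intro sum_mono) auto
    finally show ?thesis .
  qed
  have "(norm (vmask {i. bl i = j} u))^2 = (\<Sum>i\<in>{i. bl i = j}. (cmod (u$i))^2)" by (rule normsq_mask)
  also have "\<dots> \<le> (\<Sum>i\<in>{i. bl i = j}. (M / K)^2)"
  proof (intro sum_mono power_mono)
    fix i assume ii: "i \<in> {i. bl i = j}"
    have "real K > 0" using K by simp
    then show "cmod (u$i) \<le> M / K" using each[of i] ii by (simp add: pos_le_divide_eq)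
  qed simp
  also have "\<dots> = card {i. bl i = j} * (M / K)^2" by simp
  also have "\<dots> \<le> K * (M / K)^2" using c1[of j] j by (intro mult_right_mono) simp_all
  also have "\<dots> = (M / sqrt K)^2"
  proof -
    have "real K \<noteq> 0" using K by simp
    then show ?thesis by (simp add: power_divide power2_eq_square)
  qed
  finally have "norm (vmask {i. bl i = j} u) \<le> M / sqrt K"
    by (rule power2_le_imp_le) (use Mnn in simp)
  moreover have "sqrt K > 0" using K by simp
  ultimately show ?thesis by (simp add: M_def pos_le_divide_eq)
qed

lemma l1_supp:
  fixes z :: "complex^'n::finite"
  assumes "\<And>i. i \<notin> T \<Longrightarrow> z$i = 0"
  shows "l1 z \<le> sqrt (card T) * norm z"
proof -
  have vz: "vmask T z = z" using assms by (auto simp: vmask_def vec_eq_iff)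
  have a: "l1 z = (\<Sum>i\<in>T. cmod (z$i))" using l1_mask[of T z] unfolding vz .
  have b: "(norm z)^2 = (\<Sum>i\<in>T. (cmod (z$i))^2)" using normsq_mask[of T z] unfolding vz .
  have "(\<Sum>i\<in>T. \<bar>cmod (z$i)\<bar>) \<le> sqrt (card T) * sqrt (\<Sum>i\<in>T. (cmod (z$i))^2)"
    by (rule cs_sum) simp
  moreover have "sqrt (\<Sum>i\<in>T. (cmod (z$i))^2) = norm z" by (simp add: b[symmetric])
  ultimately show ?thesis using a by simp
qed

lemma l1sq_diff:
  fixes x p :: "complex^'n::finite"
  assumes "\<And>i. i \<notin> T \<Longrightarrow> x$i = 0" "\<And>i. i \<notin> T \<Longrightarrow> p$i = 0"
  shows "(l1 x)^2 - (l1 p)^2 \<le> card T * norm (outer p - outer x)"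
proof -
  have vx: "vmask T x = x" "vmask T p = p" using assms by (auto simp: vmask_def vec_eq_iff)
  have lx: "l1 x = (\<Sum>i\<in>T. cmod (x$i))" "l1 p = (\<Sum>i\<in>T. cmod (p$i))"
    using l1_mask[of T x] l1_mask[of T p] unfolding vx by simp_all
  define f where "f = (\<lambda>ij. cmod (p$(fst ij) * cnj (p$(snd ij)) - x$(fst ij) * cnj (x$(snd ij))))"
  have "(l1 x)^2 - (l1 p)^2 = (\<Sum>i\<in>T. \<Sum>j\<in>T. cmod (x$i) * cmod (x$j) - cmod (p$i) * cmod (p$j))"
    unfolding lx power2_eq_square by (simp add: sum_product sum_subtractf)
  also have "\<dots> \<le> (\<Sum>i\<in>T. \<Sum>j\<in>T. f (i,j))"
  proof (intro sum_mono)
    fix i j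
    have "cmod (x$i * cnj (x$j)) - cmod (p$i * cnj (p$j)) \<le> cmod (p$i * cnj (p$j) - x$i * cnj (x$j))"
      by (metis norm_minus_commute norm_triangle_ineq2)
    then show "cmod (x$i) * cmod (x$j) - cmod (p$i) * cmod (p$j) \<le> f (i,j)" by (simp add: f_def norm_mult)
  qed
  also have "\<dots> = (\<Sum>ij\<in>T\<times>T. \<bar>f ij\<bar>)" by (simp add: sum.cartesian_product' f_def)
  also have "\<dots> \<le> sqrt (card (T\<times>T)) * sqrt (\<Sum>ij\<in>T\<times>T. (f ij)^2)" by (rule cs_sum) simp
  also have "\<dots> \<le> card T * norm (outer p - outer x)"
  proof -
    have c: "sqrt (card (T\<times>T)) = card T" by (simp add: card_cartesian_product)
    have "(\<Sum>ij\<in>T\<times>T. (f ij)^2) = (\<Sum>i\<in>T. \<Sum>j\<in>T. (f (i,j))^2)"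
      by (simp only: sum.cartesian_product')
    also have "\<dots> \<le> (\<Sum>i\<in>UNIV. \<Sum>j\<in>UNIV. (f (i,j))^2)"
    proof -
      have "(\<Sum>i\<in>T. \<Sum>j\<in>T. (f (i,j))^2) \<le> (\<Sum>i\<in>T. \<Sum>j\<in>UNIV. (f (i,j))^2)"
        by (rule sum_mono, rule sum_mono2) simp_all
      also have "\<dots> \<le> (\<Sum>i\<in>UNIV. \<Sum>j\<in>UNIV. (f (i,j))^2)"
        by (rule sum_mono2) (simp_all add: sum_nonneg)
      finally show ?thesis .
    qed
    also have "\<dots> = (norm (outer p - outer x))^2"
      by (simp only: norm_sq_vec f_def fst_conv snd_conv vector_minus_component outer_def vec_lambda_beta)
    finally have "sqrt (\<Sum>ij\<in>T\<times>T. (f ij)^2) \<le> sqrt ((norm (outer p - outer x))^2)"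
      by (rule real_sqrt_le_mono)
    then have "sqrt (\<Sum>ij\<in>T\<times>T. (f ij)^2) \<le> norm (outer p - outer x)" by simp
    from mult_left_mono[OF this, of "sqrt (card (T\<times>T))"] show ?thesis unfolding c by simp
  qed
  finally show ?thesis .
qed



lemma l1m_double: "l1m (v + v) = 2 * l1m v"
  by (simp add: l1m_def sum_distrib_left abs_mult flip: mult_2)

lemma l1m_diff: "l1m (u - v) \<le> l1m u + l1m v"
  using l1m_add[of u "-v"] by (simp add: l1m_minus)

lemma nz_supp:
  assumes "\<And>i. a$i \<noteq> 0 \<Longrightarrow> i \<in> S" "\<And>i. c$i \<noteq> 0 \<Longrightarrow> i \<in> S"
  shows "nzrows (outer2 a b + outer2 c d) \<le> card S"
proof -
  have "{i. a$i \<noteq> 0} \<union> {i. c$i \<noteq> 0} \<subseteq> S" using assms by auto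
  then have "card ({i. a$i \<noteq> 0} \<union> {i. c$i \<noteq> 0}) \<le> card S" by (intro card_mono) auto
  then show ?thesis using nzrows_outer2[of a b c d] by linarith
qed

lemma l1_decomp:
  fixes u :: "complex^'n::finite" and bl :: "'n \<Rightarrow> nat"
  assumes "\<And>i. bl i \<le> N"
  shows "l1 u = (\<Sum>j\<in>{0..N}. l1 (vmask {i. bl i = j} u))"
proof -
  have "(\<Sum>j\<in>{0..N}. l1 (vmask {i. bl i = j} u)) = (\<Sum>j\<in>{0..N}. \<Sum>i\<in>UNIV. if bl i = j then cmod (u$i) else 0)"
    unfolding l1_def vmask_def by (intro sum.cong refl) (simp add: if_distrib)
  also have "\<dots> = (\<Sum>i\<in>UNIV. \<Sum>j\<in>{0..N}. if bl i = j then cmod (u$i) else 0)" by (rule sum.swap)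
  also have "\<dots> = l1 u" unfolding l1_def
  proof (intro sum.cong refl)
    fix i
    have "bl i \<in> {0..N}" using assms by simp
    then show "(\<Sum>j\<in>{0..N}. if bl i = j then cmod (u$i) else 0) = cmod (u$i)"
      using sum.delta'[of "{0..N}" "bl i" "\<lambda>_. cmod (u$i)"] by simp
  qed
  finally show ?thesis by simp
qed

lemma vec_decomp:
  fixes u :: "complex^'n::finite" and bl :: "'n \<Rightarrow> nat"
  assumes "\<And>i. bl i \<le> N"
  shows "u = (\<Sum>j\<in>{0..N}. vmask {i. bl i = j} u)"
proof -
  have "u$i = (\<Sum>j\<in>{0..N}. if bl i = j then u$i else 0)" for i
  proof -
    have "bl i \<in> {0..N}" using assms by simp
    then show ?thesis using sum.delta'[of "{0..N}" "bl i" "\<lambda>_. u$i"] by simp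
  qed
  then show ?thesis by (simp add: vec_eq_iff vmask_def)
qed

theorem theorem2:
  fixes a :: "'m::finite \<Rightarrow> complex^'n::finite"
    and k :: nat and \<alpha> c C \<epsilon> :: real
    and x0 xs :: "complex^'n" and w :: "real^'m"
  assumes "k \<ge> 1" and "\<alpha> > 0" and "\<alpha> * real k \<in> \<nat>"
    and "RIP a 2 (2 * \<alpha> * real k) c C"
    and "c - 4 * C / sqrt \<alpha> - C / \<alpha> > 0"
    and "x0 \<noteq> 0" and "l0 x0 \<le> k"
    and "\<epsilon> \<ge> 0" and "norm w \<le> \<epsilon>"
    and "norm (meas a (outer xs) - (meas a (outer x0) + w)) \<le> \<epsilon>"
    and "\<And>x. norm (meas a (outer x) - (meas a (outer x0) + w)) \<le> \<epsilon> \<Longrightarrow> l1 xs \<le> l1 x"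
  shows "let C1 = (1 / \<alpha> + 4 / sqrt \<alpha> + 1) / (c - 4 * C / sqrt \<alpha> - C / \<alpha>) in
     frob (outer xs - outer x0) \<le> C1 * (2 * \<epsilon> / sqrt (real CARD('m))) \<and>
     (INF \<gamma>\<in>{\<gamma>::complex. cmod \<gamma> = 1}. norm (\<gamma> *s xs - x0))
       \<le> min (2 * sqrt 2 * C1 * \<epsilon> / (sqrt (real CARD('m)) * norm x0))
              (2 * sqrt (2 * sqrt 2 * C1) * sqrt \<epsilon> * (real CARD('n) / real CARD('m)) powr (1/4))"
proof -
  define m where "m = real CARD('m)"
  have mpos: "m > 0" by (simp add: m_def)
  define u where "u = xs"
  define T0 where "T0 = {i. x0$i \<noteq> 0}"
  have cardT0: "card T0 \<le> k" using assms(7) by (simp add: l0_def T0_def)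
  have cC: "0 < c" "c \<le> C" using assms(4) unfolding RIP_def by auto
  have ripX: "c * norm X \<le> l1m (meas a X) / m \<and> l1m (meas a X) / m \<le> C * norm X"
    if "hermitian X" "rank X \<le> 2" "real (nzrows X) \<le> 2 * \<alpha> * real k" for X
    using assms(4) that unfolding RIP_def m_def frob_eq_norm by blast
  define s where "s = sqrt \<alpha>"
  have spos: "s > 0" using assms(2) by (simp add: s_def)
  have ss: "s * s = \<alpha>" using assms(2) by (simp add: s_def)
  define Dn where "Dn = c - 4 * C / s - C / \<alpha>"
  have Dpos: "Dn > 0" using assms(5) by (simp add: Dn_def s_def)
  have a1: "\<alpha> \<ge> 1"
  proof (rule ccontr)
    assume "\<not> \<alpha> \<ge> 1"
    then have "C \<le> C / \<alpha>" using assms(2) cC by (simp add: le_divide_eq)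
    moreover have "0 \<le> 4 * C / s" using cC spos by simp
    ultimately show False using Dpos cC unfolding Dn_def by linarith
  qed
  obtain K :: nat where K: "\<alpha> * real k = real K" using assms(3) by (auto elim!: Nats_cases)
  have kK: "real k \<le> real K" using mult_right_mono[OF a1, of "real k"] K by simp
  then have kK': "k \<le> K" by simp
  have K1: "K \<ge> 1" using kK' assms(1) by simp
  obtain bl where bl0: "\<And>i. bl i = 0 \<longleftrightarrow> i \<in> T0"
    and blN: "\<And>i. bl i \<le> CARD('n)"
    and bl1: "\<And>j. j \<ge> 1 \<Longrightarrow> card {i. bl i = j} \<le> K"
    and bl2: "\<And>j i i'. j \<ge> 2 \<Longrightarrow> bl i = j \<Longrightarrow> bl i' = j - 1 \<Longrightarrow> cmod (u$i) \<le> cmod (u$i')"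
    and bl3: "\<And>j i. j \<ge> 2 \<Longrightarrow> bl i = j \<Longrightarrow> card {i'. bl i' = j - 1} \<ge> K"
    using blocks[OF K1, where u = u and Z = T0] by blast
  define N where "N = CARD('n)"
  have N1: "N \<ge> 1" by (simp add: N_def Suc_le_eq)
  define B where "B j = {i. bl i = j}" for j
  have B0: "B 0 = T0" using bl0 by (auto simp: B_def)
  have cardB: "card (B j) \<le> K" for j
  proof (cases "j = 0")
    case True then show ?thesis using B0 cardT0 kK' by simp
  next
    case False then show ?thesis using bl1[of j] by (simp add: B_def)
  qed
  have cardBB: "real (card (B i \<union> B j)) \<le> 2 * \<alpha> * real k" for i j
  proof -
    have "card (B i \<union> B j) \<le> K + K" using card_Un_le[of "B i" "B j"] cardB[of i] cardB[of j] by linarith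
    then show ?thesis using K by simp
  qed
  define wv where "wv j = vmask (B j) u" for j
  define p where "p = wv 0"
  define J where "J = {2..N}"
  define W where "W = (\<Sum>j\<in>J. wv j)"
  define q01 where "q01 = p + wv 1"
  have udec: "u = q01 + W"
  proof -
    have "u = (\<Sum>j\<in>{0..N}. wv j)" unfolding wv_def B_def N_def by (rule vec_decomp) (rule blN)
    also have "\<dots> = wv 0 + (wv 1 + (\<Sum>j\<in>{2..N}. wv j))"
      using N1 by (simp add: sum.atLeast_Suc_atMost numeral_2_eq_2)
    finally show ?thesis by (simp add: q01_def p_def W_def J_def add.assoc)
  qed
  define H where "H = outer u - outer x0"
  define H01 where "H01 = outer2 q01 q01 - outer2 x0 x0"
  define X0 where "X0 j = outer2 p (wv j) + outer2 (wv j) p" for j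
  define X1 where "X1 j = outer2 (wv 1) (wv j) + outer2 (wv j) (wv 1)" for j
  define P where "P i j = outer2 (wv i) (wv j) + outer2 (wv j) (wv i)" for i j
  define WW where "WW = outer2 W W"
  have e1: "outer2 q01 W = (\<Sum>j\<in>J. outer2 p (wv j)) + (\<Sum>j\<in>J. outer2 (wv 1) (wv j))"
    unfolding q01_def W_def by (simp add: outer2_add_left outer2_sum_right sum.distrib)
  have e2: "outer2 W q01 = (\<Sum>j\<in>J. outer2 (wv j) p) + (\<Sum>j\<in>J. outer2 (wv j) (wv 1))"
    unfolding q01_def W_def by (simp add: outer2_add_right outer2_sum_left sum.distrib)
  have ou: "outer u = outer2 q01 q01 + outer2 q01 W + outer2 W q01 + WW"
    unfolding outer_eq WW_def by (subst udec)+ (simp add: outer2_add_left outer2_add_right algebra_simps)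
  have Hdec: "H = H01 + (\<Sum>j\<in>J. X0 j) + (\<Sum>j\<in>J. X1 j) + WW"
    unfolding H_def ou e1 e2 H01_def X0_def X1_def by (simp add: sum.distrib outer_eq algebra_simps)
  have WWdec: "WW + WW = (\<Sum>i\<in>J. \<Sum>j\<in>J. P i j)"
  proof -
    have a: "WW = (\<Sum>i\<in>J. \<Sum>j\<in>J. outer2 (wv j) (wv i))" unfolding WW_def W_def
      by (simp add: outer2_sum_left outer2_sum_right)
    also have "\<dots> = (\<Sum>j\<in>J. \<Sum>i\<in>J. outer2 (wv j) (wv i))" by (rule sum.swap)
    finally have b: "WW = (\<Sum>i\<in>J. \<Sum>j\<in>J. outer2 (wv i) (wv j))" .
    show ?thesis unfolding P_def sum.distrib by (subst (1) b, subst a) simp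
  qed
  have supp: "wv j $ i \<noteq> 0 \<Longrightarrow> i \<in> B j" for i j by (simp add: wv_def vmask_def split: if_splits)
  have rip_up: "l1m (meas a X) / m \<le> C * norm X"
    if "X = outer2 v1 v2 + outer2 v2 v1" "\<And>i. v1$i \<noteq> 0 \<Longrightarrow> i \<in> B j1 \<union> B j2" "\<And>i. v2$i \<noteq> 0 \<Longrightarrow> i \<in> B j1 \<union> B j2" for X v1 v2 j1 j2
  proof -
    have "hermitian X" using that by (simp add: herm_sym)
    moreover have "rank X \<le> 2" using that by (simp add: rank_outer2)
    moreover have "real (nzrows X) \<le> 2 * \<alpha> * real k"
      using nz_supp[of v1 "B j1 \<union> B j2" v2 v2 v1] that cardBB[of j1 j2] by simp
    ultimately show ?thesis using ripX by blast
  qed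
  have rip_lo: "c * norm H01 \<le> l1m (meas a H01) / m"
  proof -
    have H01': "H01 = outer2 q01 q01 + outer2 (-x0) x0" by (simp add: H01_def outer2_minus_left)
    have "hermitian H01" by (simp add: H01_def herm_diff)
    moreover have "rank H01 \<le> 2" unfolding H01' by (rule rank_outer2)
    moreover have "real (nzrows H01) \<le> 2 * \<alpha> * real k"
    proof -
      have "nzrows H01 \<le> card (B 0 \<union> B 1)" unfolding H01'
      proof (rule nz_supp)
        show "i \<in> B 0 \<union> B 1" if h: "q01$i \<noteq> 0" for i
        proof (cases "wv 1 $ i = 0")
          case True
          then have "wv 0 $ i \<noteq> 0" using h by (simp add: q01_def p_def)
          then show ?thesis using supp by blast
        next
          case False then show ?thesis using supp by blast
        qed
        show "(-x0)$i \<noteq> 0 \<Longrightarrow> i \<in> B 0 \<union> B 1" for i using B0 by (auto simp: T0_def)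
      qed
      then show ?thesis using cardBB[of 0 1] by linarith
    qed
    ultimately show ?thesis using ripX by blast
  qed
  have rip_up': "l1m (meas a X) \<le> m * (C * norm X)"
    if "X = outer2 v1 v2 + outer2 v2 v1" "\<And>i. v1$i \<noteq> 0 \<Longrightarrow> i \<in> B j1 \<union> B j2" "\<And>i. v2$i \<noteq> 0 \<Longrightarrow> i \<in> B j1 \<union> B j2" for X v1 v2 j1 j2
    using rip_up[OF that] mpos by (simp add: pos_divide_le_eq mult.commute)
  have rip_lo': "m * (c * norm H01) \<le> l1m (meas a H01)"
    using rip_lo mpos by (simp add: pos_le_divide_eq mult.commute)
  define S where "S = (\<Sum>j\<in>J. norm (wv j))"
  have Snn: "S \<ge> 0" by (simp add: S_def sum_nonneg)
  have disj: "wv i $ x = 0 \<or> wv j $ x = 0" if "i \<noteq> j" for i j x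
    using supp[of i x] supp[of j x] that by (auto simp: B_def)
  have nX0: "norm (X0 j) = sqrt 2 * (norm p * norm (wv j))" if "j \<in> J" for j
    unfolding X0_def p_def using that by (intro norm_sym_disj disj) (auto simp: J_def)
  have nX1: "norm (X1 j) = sqrt 2 * (norm (wv 1) * norm (wv j))" if "j \<in> J" for j
    unfolding X1_def using that by (intro norm_sym_disj disj) (auto simp: J_def)
  have nP: "norm (P i j) \<le> 2 * (norm (wv i) * norm (wv j))" for i j
    unfolding P_def using norm_triangle_ineq[of "outer2 (wv i) (wv j)" "outer2 (wv j) (wv i)"]
    by (simp add: norm_outer2)
  have RX0: "l1m (meas a (X0 j)) \<le> m * (C * (sqrt 2 * (norm p * norm (wv j))))" if "j \<in> J" for j
    using rip_up'[of "X0 j" p "wv j" 0 j] supp nX0[OF that] unfolding X0_def p_def by auto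
  have RX1: "l1m (meas a (X1 j)) \<le> m * (C * (sqrt 2 * (norm (wv 1) * norm (wv j))))" if "j \<in> J" for j
    using rip_up'[of "X1 j" "wv 1" "wv j" 1 j] supp nX1[OF that] unfolding X1_def by auto
  have RP: "l1m (meas a (P i j)) \<le> m * (C * (2 * (norm (wv i) * norm (wv j))))" for i j
  proof -
    have "l1m (meas a (P i j)) \<le> m * (C * norm (P i j))"
      using rip_up'[of "P i j" "wv i" "wv j" i j] supp unfolding P_def by auto
    also have "\<dots> \<le> m * (C * (2 * (norm (wv i) * norm (wv j))))"
      using nP[of i j] cC mpos by (intro mult_left_mono) auto
    finally show ?thesis .
  qed
  have sumX0: "(\<Sum>j\<in>J. l1m (meas a (X0 j))) \<le> m * C * sqrt 2 * norm p * S"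
  proof -
    have "(\<Sum>j\<in>J. l1m (meas a (X0 j))) \<le> (\<Sum>j\<in>J. m * C * sqrt 2 * norm p * norm (wv j))"
      using RX0 by (intro sum_mono) (simp add: mult.assoc)
    also have "\<dots> = m * C * sqrt 2 * norm p * S" by (simp add: S_def sum_distrib_left)
    finally show ?thesis .
  qed
  have sumX1: "(\<Sum>j\<in>J. l1m (meas a (X1 j))) \<le> m * C * sqrt 2 * norm (wv 1) * S"
  proof -
    have "(\<Sum>j\<in>J. l1m (meas a (X1 j))) \<le> (\<Sum>j\<in>J. m * C * sqrt 2 * norm (wv 1) * norm (wv j))"
      using RX1 by (intro sum_mono) (simp add: mult.assoc)
    also have "\<dots> = m * C * sqrt 2 * norm (wv 1) * S" by (simp add: S_def sum_distrib_left)
    finally show ?thesis .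
  qed
  have RWW: "l1m (meas a WW) \<le> m * C * S^2"
  proof -
    have "2 * l1m (meas a WW) = l1m (meas a (WW + WW))" by (simp only: meas_add l1m_double)
    also have "\<dots> \<le> (\<Sum>i\<in>J. \<Sum>j\<in>J. l1m (meas a (P i j)))"
      unfolding WWdec meas_sum by (intro order_trans[OF l1m_sum] sum_mono l1m_sum)
    also have "\<dots> \<le> (\<Sum>i\<in>J. \<Sum>j\<in>J. 2 * (m * C) * (norm (wv i) * norm (wv j)))"
      using RP by (intro sum_mono) (simp add: mult_ac)
    also have "\<dots> = 2 * (m * C * S^2)"
      by (simp add: S_def power2_eq_square sum_product sum_distrib_left mult_ac)
    finally show ?thesis by simp
  qed
  have low: "l1m (meas a H01) \<le> l1m (meas a H) + (\<Sum>j\<in>J. l1m (meas a (X0 j))) + (\<Sum>j\<in>J. l1m (meas a (X1 j))) + l1m (meas a WW)"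
  proof -
    have "H01 = H - (\<Sum>j\<in>J. X0 j) - (\<Sum>j\<in>J. X1 j) - WW" using Hdec by simp
    then have mH: "meas a H01 = meas a H - (\<Sum>j\<in>J. meas a (X0 j)) - (\<Sum>j\<in>J. meas a (X1 j)) - meas a WW"
      by (simp add: meas_diff meas_sum)
    have "l1m (meas a H01) \<le> l1m (meas a H) + l1m (\<Sum>j\<in>J. meas a (X0 j)) + l1m (\<Sum>j\<in>J. meas a (X1 j)) + l1m (meas a WW)"
      using l1m_diff[of "meas a H - (\<Sum>j\<in>J. meas a (X0 j)) - (\<Sum>j\<in>J. meas a (X1 j))" "meas a WW"]
        l1m_diff[of "meas a H - (\<Sum>j\<in>J. meas a (X0 j))" "\<Sum>j\<in>J. meas a (X1 j)"]
        l1m_diff[of "meas a H" "\<Sum>j\<in>J. meas a (X0 j)"] unfolding mH by linarith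
    moreover have "l1m (\<Sum>j\<in>J. meas a (X0 j)) \<le> (\<Sum>j\<in>J. l1m (meas a (X0 j)))" by (rule l1m_sum)
    moreover have "l1m (\<Sum>j\<in>J. meas a (X1 j)) \<le> (\<Sum>j\<in>J. l1m (meas a (X1 j)))" by (rule l1m_sum)
    ultimately show ?thesis by linarith
  qed
  have RH: "l1m (meas a H) \<le> sqrt m * (2 * \<epsilon>)"
  proof -
    have "meas a H = (meas a (outer xs) - (meas a (outer x0) + w)) + w"
      by (simp add: H_def meas_diff u_def)
    then have "norm (meas a H) \<le> \<epsilon> + \<epsilon>"
      using norm_triangle_ineq[of "meas a (outer xs) - (meas a (outer x0) + w)" w] assms(9,10) by simp
    then have hh: "sqrt m * norm (meas a H) \<le> sqrt m * (2 * \<epsilon>)" using mpos by (intro mult_left_mono) auto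
    show ?thesis using l1m_le[of "meas a H"] hh unfolding m_def by linarith
  qed
  have l1ux: "l1 u \<le> l1 x0" unfolding u_def using assms(11)[of x0] assms(9) by simp
  define L where "L = (\<Sum>j\<in>{1..N}. l1 (wv j))"
  have l1nn: "l1 v \<ge> 0" for v by (simp add: l1_def sum_nonneg)
  have Lnn: "L \<ge> 0" unfolding L_def by (simp add: sum_nonneg l1nn)
  have l1u: "l1 u = l1 p + L"
  proof -
    have "l1 u = (\<Sum>j\<in>{0..N}. l1 (wv j))" unfolding wv_def B_def N_def by (rule l1_decomp) (rule blN)
    also have "\<dots> = l1 p + L" using N1 by (simp add: sum.atLeast_Suc_atMost p_def L_def)
    finally show ?thesis .
  qed
  have SL: "S * sqrt K \<le> L"
  proof -
    have "S * sqrt K = (\<Sum>j\<in>J. norm (wv j) * sqrt K)" by (simp add: S_def sum_distrib_right)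
    also have "\<dots> \<le> (\<Sum>j\<in>J. l1 (wv (j - 1)))"
    proof (intro sum_mono)
      fix j assume "j \<in> J"
      then have "j \<ge> 2" by (simp add: J_def)
      then show "norm (wv j) * sqrt K \<le> l1 (wv (j - 1))"
        unfolding wv_def B_def using tail_one[OF K1, where bl = bl and u = u and j = j] bl1 bl2 bl3 by blast
    qed
    also have "\<dots> = (\<Sum>j\<in>{1..N-1}. l1 (wv j))"
    proof -
      have im: "Suc ` {1..N-1} = J" using N1 by (simp add: J_def image_Suc_atLeastAtMost)
      have "(\<Sum>j\<in>Suc ` {1..N-1}. l1 (wv (j - 1))) = (\<Sum>j\<in>{1..N-1}. l1 (wv j))"
        by (subst sum.reindex) auto
      then show ?thesis unfolding im .
    qed
    also have "\<dots> \<le> L" unfolding L_def by (intro sum_mono2) (auto simp: l1nn)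
    finally show ?thesis .
  qed
  define F0 where "F0 = norm (outer p - outer x0)"
  define F where "F = norm H01"
  have pT0: "p$i = 0" if "i \<notin> T0" for i using supp[of 0 i] that B0 by (auto simp: p_def)
  have xT0: "x0$i = 0" if "i \<notin> T0" for i using that by (simp add: T0_def)
  obtain \<gamma> where g1: "cmod \<gamma> = 1" and gP: "norm p * norm (x0 - \<gamma> *s p) \<le> sqrt 2 * F0"
    using phase_cor[of p x0] unfolding F0_def by blast
  have K1': "norm p * L \<le> sqrt k * sqrt 2 * F0"
  proof -
    have "l1 x0 \<le> l1 (x0 - \<gamma> *s p) + l1 p"
    proof -
      have "cmod (x0$i) \<le> cmod ((x0 - \<gamma> *s p)$i) + cmod (p$i)" for i
        using norm_triangle_ineq[of "x0$i - \<gamma> * p$i" "\<gamma> * p$i"] g1 by (simp add: norm_mult)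
      then show ?thesis unfolding l1_def by (simp add: sum.distrib[symmetric] sum_mono)
    qed
    moreover have "l1 (x0 - \<gamma> *s p) \<le> sqrt (card T0) * norm (x0 - \<gamma> *s p)"
      by (rule l1_supp) (simp add: pT0 xT0)
    moreover have "sqrt (card T0) * norm (x0 - \<gamma> *s p) \<le> sqrt k * norm (x0 - \<gamma> *s p)"
      using cardT0 by (intro mult_right_mono) auto
    ultimately have Lb: "L \<le> sqrt k * norm (x0 - \<gamma> *s p)" using l1u l1ux by linarith
    have "norm p * L \<le> norm p * (sqrt k * norm (x0 - \<gamma> *s p))" using Lb by (intro mult_left_mono) auto
    also have "\<dots> = sqrt k * (norm p * norm (x0 - \<gamma> *s p))" by (simp add: mult_ac)
    also have "\<dots> \<le> sqrt k * (sqrt 2 * F0)" using gP by (intro mult_left_mono) auto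
    finally show ?thesis by (simp add: mult_ac)
  qed
  have K3: "L^2 \<le> k * F0"
  proof -
    have d: "(l1 x0)^2 - (l1 p)^2 \<le> card T0 * F0" unfolding F0_def by (rule l1sq_diff) (simp_all add: pT0 xT0)
    have "card T0 * F0 \<le> k * F0" using cardT0 by (intro mult_right_mono) (auto simp: F0_def)
    moreover have "L \<le> l1 x0 - l1 p" using l1u l1ux by linarith
    moreover have "l1 p \<ge> 0" by (rule l1nn)
    ultimately have "L * L \<le> (l1 x0 - l1 p) * (l1 x0 + l1 p)"
      using Lnn by (intro mult_mono) auto
    also have "\<dots> = (l1 x0)^2 - (l1 p)^2" by (simp add: power2_eq_square algebra_simps)
    finally show ?thesis using d \<open>card T0 * F0 \<le> k * F0\<close> by (simp add: power2_eq_square)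
  qed
  have F0F: "F0 \<le> F"
  proof -
    have w1T0: "wv 1 $ i = 0" if "i \<in> T0" for i using that bl0[of i] by (simp add: wv_def vmask_def B_def)
    have e: "outer p - outer x0 = (\<chi> i j. if i \<in> T0 \<and> j \<in> T0 then H01$i$j else 0)"
      unfolding vec_eq_iff
    proof (intro allI)
      fix i j
      show "(outer p - outer x0) $ i $ j = (\<chi> i j. if i \<in> T0 \<and> j \<in> T0 then H01$i$j else 0) $ i $ j"
        by (cases "i \<in> T0"; cases "j \<in> T0") (simp_all add: outer_def H01_def outer2_def q01_def pT0 xT0 w1T0 w1T0[unfolded One_nat_def])
    qed
    show ?thesis unfolding F0_def F_def e by (rule norm_restrict_le)
  qed
  have V1F: "(norm (wv 1))^2 \<le> F"
  proof -
    have pB1: "p $ i = 0" "x0 $ i = 0" if "i \<in> B 1" for i using that B0 pT0 xT0 by (auto simp: B_def)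
    have wB1: "wv 1 $ i = 0" if "i \<notin> B 1" for i using that by (simp add: wv_def vmask_def)
    have e: "outer2 (wv 1) (wv 1) = (\<chi> i j. if i \<in> B 1 \<and> j \<in> B 1 then H01$i$j else 0)"
      unfolding vec_eq_iff
    proof (intro allI)
      fix i j
      show "outer2 (wv 1) (wv 1) $ i $ j = (\<chi> i j. if i \<in> B 1 \<and> j \<in> B 1 then H01$i$j else 0) $ i $ j"
        by (cases "i \<in> B 1"; cases "j \<in> B 1") (simp_all add: H01_def outer2_def q01_def pB1 wB1 wB1[unfolded One_nat_def] pB1[unfolded One_nat_def])
    qed
    have "norm (outer2 (wv 1) (wv 1)) \<le> F" unfolding F_def e by (rule norm_restrict_le)
    then show ?thesis by (simp add: norm_outer2 power2_eq_square)
  qed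
  have Fnn: "F \<ge> 0" by (simp add: F_def)
  have F0nn: "F0 \<ge> 0" by (simp add: F0_def)
  have kpos: "sqrt (real k) > 0" using assms(1) by simp
  have sK: "sqrt (real K) = s * sqrt (real k)" using K[symmetric] assms(2) by (simp add: s_def real_sqrt_mult)
  have Pnn: "norm p \<ge> 0" by simp
  have ta: "sqrt 2 * norm p * S \<le> 2 * F / s"
  proof -
    have "sqrt (real k) * (norm p * S * s) = norm p * (S * sqrt (real K))" using sK by (simp add: mult_ac)
    also have "\<dots> \<le> norm p * L" using SL by (intro mult_left_mono) auto
    also have "\<dots> \<le> sqrt k * sqrt 2 * F0" by (rule K1')
    also have "\<dots> \<le> sqrt k * (sqrt 2 * F)" using F0F kpos by (simp add: mult.assoc)
    finally have "norm p * S * s \<le> sqrt 2 * F" using kpos by (simp add: mult_le_cancel_left_pos)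
    then have "sqrt 2 * (norm p * S * s) \<le> sqrt 2 * (sqrt 2 * F)" by (intro mult_left_mono) auto
    then have "(sqrt 2 * norm p * S) * s \<le> 2 * F" by (simp add: mult_ac)
    then show ?thesis using spos by (simp add: pos_le_divide_eq)
  qed
  have tb: "norm (wv 1) * S * s \<le> F"
  proof -
    have "(norm (wv 1) * L)^2 = (norm (wv 1))^2 * L^2" by (simp add: power_mult_distrib)
    also have "\<dots> \<le> F * (k * F)"
    proof (rule mult_mono)
      show "L^2 \<le> k * F" using K3 F0F by (meson mult_left_mono of_nat_0_le_iff order_trans)
    qed (use V1F Fnn in auto)
    also have "\<dots> = (sqrt k * F)^2" by (simp add: power_mult_distrib power2_eq_square)
    finally have "norm (wv 1) * L \<le> sqrt k * F" by (rule power2_le_imp_le) (use Fnn in simp)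
    moreover have "sqrt (real k) * (norm (wv 1) * S * s) \<le> norm (wv 1) * L"
    proof -
      have "sqrt (real k) * (norm (wv 1) * S * s) = norm (wv 1) * (S * sqrt (real K))" using sK by (simp add: mult_ac)
      also have "\<dots> \<le> norm (wv 1) * L" using SL by (intro mult_left_mono) auto
      finally show ?thesis .
    qed
    ultimately have "sqrt (real k) * (norm (wv 1) * S * s) \<le> sqrt (real k) * F" by linarith
    then show ?thesis using kpos by (simp add: mult_le_cancel_left_pos)
  qed
  have tc: "S^2 * \<alpha> \<le> F"
  proof -
    have "real k * (S^2 * \<alpha>) = (S * sqrt (real K))^2"
      using sK ss by (simp add: power_mult_distrib power2_eq_square mult_ac)
    also have "\<dots> \<le> L^2" using SL Snn by (intro power_mono) auto
    also have "\<dots> \<le> k * F" using K3 F0F by (meson mult_left_mono of_nat_0_le_iff order_trans)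
    finally show ?thesis using assms(1) by (simp add: mult_le_cancel_left_pos)
  qed
  have tb': "sqrt 2 * norm (wv 1) * S \<le> 2 * F / s"
  proof -
    have "sqrt 2 * (norm (wv 1) * S * s) \<le> 2 * F" using tb Fnn
      by (meson mult_right_mono order_trans real_sqrt_le_iff sqrt2_less_2 less_imp_le mult_left_mono real_sqrt_ge_zero zero_le_numeral)
    then show ?thesis using spos by (simp add: pos_le_divide_eq mult_ac)
  qed
  have tc': "S^2 \<le> F / \<alpha>" using tc assms(2) by (simp add: pos_le_divide_eq)
  define T where "T = sqrt 2 * norm p * S + sqrt 2 * norm (wv 1) * S + S^2"
  have Tb: "T \<le> 4 * F / s + F / \<alpha>" 
  proof -
    have "4 * F / s = 2 * F / s + 2 * F / s" by (simp add: add_divide_distrib[symmetric])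
    then show ?thesis unfolding T_def using ta tb' tc' by linarith
  qed
  have cF: "c * F \<le> 2 * \<epsilon> / sqrt m + C * T"
  proof -
    have "m * (c * F) \<le> sqrt m * (2 * \<epsilon>) + m * (C * T)"
      using rip_lo' low sumX0 sumX1 RWW RH unfolding F_def T_def by (simp add: algebra_simps)
    moreover have "m * (2 * \<epsilon> / sqrt m) = sqrt m * (2 * \<epsilon>)"
    proof -
      have ms: "m / sqrt m = sqrt m" using mpos by (simp add: real_div_sqrt)
      have "m * (2 * \<epsilon> / sqrt m) = (m / sqrt m) * (2 * \<epsilon>)" using mpos by (simp add: field_simps)
      then show ?thesis using ms by simp
    qed
    ultimately have "m * (c * F) \<le> m * (2 * \<epsilon> / sqrt m + C * T)"
      by (simp add: distrib_left)
    then show ?thesis using mpos by (simp add: mult_le_cancel_left_pos)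
  qed
  have FD: "F * Dn \<le> 2 * \<epsilon> / sqrt m"
  proof -
    have "C * T \<le> C * (4 * F / s + F / \<alpha>)" using Tb cC by (intro mult_left_mono) auto
    then show ?thesis using cF unfolding Dn_def by (simp add: algebra_simps)
  qed
  have Fb: "F \<le> (2 * \<epsilon> / sqrt m) / Dn" using FD Dpos by (subst pos_le_divide_eq) auto
  have nH: "norm H \<le> F + T"
  proof -
    have "norm H \<le> F + norm (\<Sum>j\<in>J. X0 j) + norm (\<Sum>j\<in>J. X1 j) + norm WW"
      unfolding Hdec F_def by (meson add_mono norm_triangle_ineq order_trans order_refl)
    moreover have "norm (\<Sum>j\<in>J. X0 j) \<le> sqrt 2 * norm p * S"
    proof -
      have "norm (\<Sum>j\<in>J. X0 j) \<le> (\<Sum>j\<in>J. norm (X0 j))" by (rule norm_sum)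
      also have "\<dots> = sqrt 2 * norm p * S" using nX0 by (simp add: S_def sum_distrib_left mult_ac)
      finally show ?thesis .
    qed
    moreover have "norm (\<Sum>j\<in>J. X1 j) \<le> sqrt 2 * norm (wv 1) * S"
    proof -
      have "norm (\<Sum>j\<in>J. X1 j) \<le> (\<Sum>j\<in>J. norm (X1 j))" by (rule norm_sum)
      also have "\<dots> = sqrt 2 * norm (wv 1) * S" using nX1 by (simp add: S_def sum_distrib_left mult_ac)
      finally show ?thesis .
    qed
    moreover have "norm WW \<le> S^2"
    proof -
      have "norm W \<le> S" unfolding W_def S_def by (rule norm_sum)
      then have "(norm W)^2 \<le> S^2" by (intro power_mono) auto
      then show ?thesis by (simp add: WW_def norm_outer2 power2_eq_square)
    qed
    ultimately show ?thesis unfolding T_def by linarith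
  qed
  define C1 where "C1 = (1 / \<alpha> + 4 / s + 1) / Dn"
  have C1nn: "C1 \<ge> 0" unfolding C1_def using Dpos spos assms(2) by simp
  have mainb: "norm H \<le> C1 * (2 * \<epsilon> / sqrt m)"
  proof -
    have "norm H \<le> F * (1 + 4 / s + 1 / \<alpha>)" using nH Tb by (simp add: algebra_simps)
    also have "\<dots> \<le> (2 * \<epsilon> / sqrt m) / Dn * (1 + 4 / s + 1 / \<alpha>)"
      using Fb spos assms(2) by (intro mult_right_mono) auto
    also have "\<dots> = C1 * (2 * \<epsilon> / sqrt m)" by (simp add: C1_def field_simps)
    finally show ?thesis .
  qed
  obtain \<gamma>' where g'1: "cmod \<gamma>' = 1" and g'2: "norm x0 * norm (x0 - \<gamma>' *s u) \<le> sqrt 2 * norm H"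
    and g'3: "(norm (x0 - \<gamma>' *s u))^2 \<le> 2 * norm H"
    using phase_cor[of u x0] unfolding H_def by blast
  define d where "d = norm (\<gamma>' *s xs - x0)"
  have dd: "d = norm (x0 - \<gamma>' *s u)" by (simp add: d_def u_def norm_minus_commute)
  define Bd where "Bd = C1 * (2 * \<epsilon> / sqrt m)"
  have Bdnn: "Bd \<ge> 0" unfolding Bd_def using C1nn assms(8) mpos by simp
  have INFd: "(INF \<gamma>\<in>{\<gamma>::complex. cmod \<gamma> = 1}. norm (\<gamma> *s xs - x0)) \<le> d"
    unfolding d_def by (rule cINF_lower[OF bdd_belowI2[where m = 0]]) (simp_all add: g'1)
  have x0pos: "norm x0 > 0" using assms(6) by simp
  have d1: "d \<le> 2 * sqrt 2 * C1 * \<epsilon> / (sqrt m * norm x0)"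
  proof -
    have "d * norm x0 \<le> sqrt 2 * norm H" using g'2 unfolding dd by (simp add: mult.commute)
    also have "\<dots> \<le> sqrt 2 * Bd" using mainb unfolding Bd_def by (intro mult_left_mono) auto
    finally have "d * norm x0 \<le> sqrt 2 * Bd" .
    then have "d \<le> sqrt 2 * Bd / norm x0" using x0pos by (simp add: pos_le_divide_eq)
    also have "\<dots> = 2 * sqrt 2 * C1 * \<epsilon> / (sqrt m * norm x0)" by (simp add: Bd_def field_simps)
    finally show ?thesis .
  qed
  have d2: "d \<le> 2 * sqrt (2 * sqrt 2 * C1) * sqrt \<epsilon> * (real CARD('n) / m) powr (1/4)"
  proof -
    define Q where "Q = (real CARD('n) / m) powr (1/4)"
    have Qnn: "Q \<ge> 0" by (simp add: Q_def)
    have Q2: "Q^2 = sqrt (real CARD('n)) / sqrt m"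
    proof -
      have "Q^2 = (real CARD('n) / m) powr (1/4 + 1/4)" unfolding Q_def power2_eq_square powr_add[symmetric] by simp
      also have "\<dots> = sqrt (real CARD('n) / m)" using mpos by (simp add: powr_half_sqrt)
      finally show ?thesis by (simp add: real_sqrt_divide)
    qed
    have nge: "sqrt (real CARD('n)) \<ge> 1" by simp
    have "d^2 \<le> 2 * Bd" using g'3 mainb unfolding dd Bd_def by linarith
    also have "\<dots> = 4 * C1 * \<epsilon> / sqrt m" by (simp add: Bd_def)
    also have "\<dots> \<le> 4 * (2 * sqrt 2 * C1) * \<epsilon> * (1 / sqrt m)"
    proof -
      have "1 \<le> sqrt (2::real)" by simp
      then have "1 \<le> 2 * sqrt 2" by linarith
      moreover have ce: "0 \<le> 4 * (C1 * \<epsilon>)" using C1nn assms(8) by simp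
      ultimately have "4 * (C1 * \<epsilon>) * 1 \<le> 4 * (C1 * \<epsilon>) * (2 * sqrt 2)" by (intro mult_left_mono)
      then have "4 * C1 * \<epsilon> \<le> 4 * (2 * sqrt 2 * C1) * \<epsilon>" by (simp add: mult_ac)
      then show ?thesis using mpos by (simp add: divide_right_mono)
    qed
    also have "\<dots> \<le> 4 * (2 * sqrt 2 * C1) * \<epsilon> * Q^2"
    proof -
      have "1 / sqrt m \<le> Q^2" unfolding Q2 using nge mpos by (simp add: divide_right_mono)
      then show ?thesis using C1nn assms(8) by (intro mult_left_mono) auto
    qed
    also have "\<dots> = (2 * sqrt (2 * sqrt 2 * C1) * sqrt \<epsilon> * Q)^2"
      using C1nn assms(8) by (simp add: power_mult_distrib)
    finally have "d^2 \<le> (2 * sqrt (2 * sqrt 2 * C1) * sqrt \<epsilon> * Q)^2" .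
    then show ?thesis unfolding Q_def[symmetric] by (rule power2_le_imp_le) (use Qnn C1nn assms(8) in simp)
  qed
  have C1e: "(1 / \<alpha> + 4 / sqrt \<alpha> + 1) / (c - 4 * C / sqrt \<alpha> - C / \<alpha>) = C1"
    by (simp add: C1_def Dn_def s_def)
  show ?thesis unfolding Let_def C1e frob_eq_norm m_def[symmetric]
    using mainb INFd d1 d2 by (simp add: H_def u_def)
qed


end
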